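(* Let $R$ be a $\star$-ring and equip the formal power series ring $R[[x]]$ with the involution $\left(\sum_{i\ge0}a_ix^i\right)^\star=\sum_{i\ge0}a_i^\star x^i$. Then $R[[x]]$ is weakly $\star$-clean if and only if $R$ is weakly $\star$-clean.
   Context: Rings are associative with identity. A $\star$-ring is a ring with a map $\star$ satisfying $(x+y)^\star=x^\star+y^\star$, $(xy)^\star=y^\star x^\star$, $(x^\star)^\star=x$. A projection is $p$ with $p^2=p=p^\star$; $P(R)$ is the set of projections, $U(R)$ the units. An element $x$ is weakly $\star$-clean if $x=u+p$ or $x=u-p$ with $u\in U(R)$, $p\in P(R)$; $R$ is weakly $\star$-clean if all its elements are. *)

theory Defs
  imports "HOL-Computational_Algebra.Formal_Power_Series"
begin

definition star_ring :: "('a::ring_1 \<Rightarrow> 'a) \<Rightarrow> bool" where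
  "star_ring s \<longleftrightarrow>
     (\<forall>x y. s (x + y) = s x + s y) \<and>
     (\<forall>x y. s (x * y) = s y * s x) \<and>
     (\<forall>x. s (s x) = x)"

definition ring_unit :: "'a::ring_1 \<Rightarrow> bool" where
  "ring_unit u \<longleftrightarrow> (\<exists>v. u * v = 1 \<and> v * u = 1)"

definition projection :: "('a::ring_1 \<Rightarrow> 'a) \<Rightarrow> 'a \<Rightarrow> bool" where
  "projection s p \<longleftrightarrow> p * p = p \<and> s p = p"

definition weakly_star_clean_elem :: "('a::ring_1 \<Rightarrow> 'a) \<Rightarrow> 'a \<Rightarrow> bool" where
  "weakly_star_clean_elem s x \<longleftrightarrow>
     (\<exists>u p. ring_unit u \<and> projection s p \<and> (x = u + p \<or> x = u - p))"

definition weakly_star_clean :: "('a::ring_1 \<Rightarrow> 'a) \<Rightarrow> bool" where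
  "weakly_star_clean s \<longleftrightarrow> (\<forall>x. weakly_star_clean_elem s x)"

definition fps_star :: "('a::ring_1 \<Rightarrow> 'a) \<Rightarrow> 'a fps \<Rightarrow> 'a fps" where
  "fps_star s f = Abs_fps (\<lambda>i. s (fps_nth f i))"

end

theory Submission
  imports Defs
begin

unbundle fps_syntax

fun rinv :: "'a::ring_1 fps \<Rightarrow> 'a \<Rightarrow> nat \<Rightarrow> 'a" where
  "rinv f c n = (if n = 0 then c else - c * (\<Sum>i<n. f $ (n-i) * rinv f c i))"

fun linv :: "'a::ring_1 fps \<Rightarrow> 'a \<Rightarrow> nat \<Rightarrow> 'a" where
  "linv f c n = (if n = 0 then c else - (\<Sum>i<n. linv f c i * f $ (n-i)) * c)"

declare rinv.simps[simp del] linv.simps[simp del]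

lemma nth_Abs: "Abs_fps g $ n = g n"
  by (simp add: Abs_fps_inverse)

lemma sum_split0:
  fixes g :: "nat \<Rightarrow> 'a::ring_1"
  shows "(\<Sum>i=0..n. g i) = g 0 + (\<Sum>i\<in>{1..n}. g i)"
  by (simp add: sum.atLeast_Suc_atMost)

lemma rinv_ok:
  fixes f :: "'a::ring_1 fps"
  assumes "f $ 0 * c = 1"
  shows "f * Abs_fps (rinv f c) = 1"
proof (rule fps_ext)
  fix n
  show "(f * Abs_fps (rinv f c)) $ n = 1 $ n"
  proof (cases "n = 0")
    case True then show ?thesis using assms by (simp add: nth_Abs rinv.simps)
  next
    case False
    have A: "(\<Sum>i\<in>{1..n}. f $ i * rinv f c (n-i)) = (\<Sum>i<n. f $ (n-i) * rinv f c i)"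
    proof (rule sum.reindex_bij_witness[where i="\<lambda>j. n - j" and j="\<lambda>i. n - i"])
    qed auto
    have "(f * Abs_fps (rinv f c)) $ n = (\<Sum>i=0..n. f $ i * rinv f c (n-i))"
      by (simp add: fps_mult_nth nth_Abs)
    also have "\<dots> = f $ 0 * rinv f c n + (\<Sum>i<n. f $ (n-i) * rinv f c i)"
      using A by (simp add: sum_split0)
    also have "f $ 0 * rinv f c n = - (f $ 0 * c) * (\<Sum>i<n. f $ (n-i) * rinv f c i)"
      using False by (simp add: rinv.simps[of f c n] mult.assoc)
    finally show ?thesis using False assms by simp
  qed
qed

lemma linv_ok:
  fixes f :: "'a::ring_1 fps"
  assumes "c * f $ 0 = 1"
  shows "Abs_fps (linv f c) * f = 1"
proof (rule fps_ext)
  fix n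
  show "(Abs_fps (linv f c) * f) $ n = 1 $ n"
  proof (cases "n = 0")
    case True then show ?thesis using assms by (simp add: nth_Abs linv.simps)
  next
    case False
    have "(Abs_fps (linv f c) * f) $ n = (\<Sum>i=0..n. linv f c i * f $ (n-i))"
      by (simp add: fps_mult_nth nth_Abs)
    also have "\<dots> = (\<Sum>i<n. linv f c i * f $ (n-i)) + linv f c n * f $ 0"
      by (simp add: atLeast0AtMost lessThan_Suc_atMost[symmetric])
    also have "linv f c n * f $ 0 = - (\<Sum>i<n. linv f c i * f $ (n-i)) * (c * f $ 0)"
      using False by (simp add: linv.simps[of f c n] mult.assoc)
    finally show ?thesis using False assms by simp
  qed
qed

lemma fps_unit:
  fixes f :: "'a::ring_1 fps"
  assumes "ring_unit (f $ 0)"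
  shows "ring_unit f"
proof -
  obtain c where c: "f $ 0 * c = 1" "c * f $ 0 = 1" using assms unfolding ring_unit_def by blast
  define v where "v = Abs_fps (rinv f c)"
  define w where "w = Abs_fps (linv f c)"
  have fv: "f * v = 1" using rinv_ok[OF c(1)] v_def by simp
  have wf: "w * f = 1" using linv_ok[OF c(2)] w_def by simp
  have "w = v" by (metis fv wf mult.assoc mult_1_left mult_1_right)
  then show ?thesis unfolding ring_unit_def using fv wf by blast
qed

theorem proposition4p9:
  fixes s :: "'a::ring_1 \<Rightarrow> 'a"
  assumes "star_ring s"
  shows "weakly_star_clean (fps_star s) \<longleftrightarrow> weakly_star_clean s"
proof
  assume H: "weakly_star_clean (fps_star s)"
  show "weakly_star_clean s" unfolding weakly_star_clean_def weakly_star_clean_elem_def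
  proof
    fix a
    obtain u P where uP: "ring_unit u" "projection (fps_star s) P"
      "fps_const a = u + P \<or> fps_const a = u - P"
      using H unfolding weakly_star_clean_def weakly_star_clean_elem_def by blast
    have "ring_unit (u $ 0)" using uP(1) unfolding ring_unit_def
      by (metis fps_mult_nth_0 fps_one_nth)
    moreover have "projection s (P $ 0)" using uP(2) unfolding projection_def fps_star_def
      by (metis fps_mult_nth_0 nth_Abs)
    moreover have "a = u $ 0 + P $ 0 \<or> a = u $ 0 - P $ 0" using uP(3)
      by (metis fps_add_nth fps_nth_fps_const fps_sub_nth)
    ultimately show "\<exists>u p. ring_unit u \<and> projection s p \<and> (a = u + p \<or> a = u - p)" by blast
  qed
next
  assume H: "weakly_star_clean s"
  have s0: "s 0 = 0" using assms unfolding star_ring_def by (metis add_cancel_right_right)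
  show "weakly_star_clean (fps_star s)" unfolding weakly_star_clean_def weakly_star_clean_elem_def
  proof
    fix f :: "'a fps"
    obtain u p where up: "ring_unit u" "projection s p" "f $ 0 = u + p \<or> f $ 0 = u - p"
      using H unfolding weakly_star_clean_def weakly_star_clean_elem_def by blast
    have P: "projection (fps_star s) (fps_const p)"
      unfolding projection_def
    proof
      show "fps_const p * fps_const p = fps_const p"
        using up(2) unfolding projection_def by (metis fps_const_mult)
      show "fps_star s (fps_const p) = fps_const p"
        using up(2) s0 unfolding projection_def fps_star_def
        by (intro fps_ext) (simp add: nth_Abs)
    qed
    show "\<exists>u p. ring_unit u \<and> projection (fps_star s) p \<and> (f = u + p \<or> f = u - p)"
    proof (cases "f $ 0 = u + p")
      case True
      have "ring_unit (f - fps_const p)" using up(1) True by (intro fps_unit) simp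
      then show ?thesis using P by (metis diff_add_cancel)
    next
      case False
      then have E: "f $ 0 = u - p" using up(3) by blast
      have "ring_unit (f + fps_const p)" using up(1) E by (intro fps_unit) simp
      then show ?thesis using P by (metis add_diff_cancel)
    qed
  qed
qed

end
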